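(* Consider a platoon of a leader moving at constant speed and $N$ heterogeneous followers with all states measured ($c_p=c_v=c_a=1$). For follower $i\in\{1,\dots,N\}$ with inertial time lag $\tau_i>0$ let $$A_i=\begin{bmatrix}0&1&0\\0&0&1\\0&0&-1/\tau_i\end{bmatrix},\qquad B_i=\begin{bmatrix}0\\0\\1/\tau_i\end{bmatrix}.$$ Suppose the information flow topology among the followers is a directed acyclic graph with $d_{ii}+p_{ii}>0$ for every $i$. For each $i$, let $\varepsilon_i>0$, let $P_i\succeq 0$ be a root of the algebraic Riccati equation $$P_iA_i+A_i^TP_i-P_iB_iB_i^TP_i+\varepsilon_iI_3=0,$$ and set the feedback gain $k_i=[k_{ip},k_{iv},k_{ia}]^T$ by $k_i^T=\alpha_iB_i^TP_i$. If $\alpha_i\ge\frac{1}{2(d_{ii}+p_{ii})}$ for all $i\in\{1,\dots,N\}$, then the closed-loop system $$\begin{bmatrix}\dot{\hat p}\\ \dot{\hat v}\\ \dot{\hat a}\end{bmatrix}=\begin{bmatrix}0&I_N&0\\0&0&I_N\\-T_pG&-T_vG&-\Delta-T_aG\end{bmatrix}\begin{bmatrix}\hat p\\ \hat v\\ \hat a\end{bmatrix}$$ is asymptotically stable, where $\Delta=\mathrm{diag}\{1/\tau_1,\dots,1/\tau_N\}$, $T_\sharp=\mathrm{diag}\{k_{1\sharp}/\tau_1,\dots,k_{N\sharp}/\tau_N\}$ for $\sharp\in\{p,v,a\}$, and $G=\mathcal{L}+\mathcal{P}$.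
   Context: The information flow among followers is a directed graph on $\{1,\dots,N\}$ with adjacency matrix $\mathcal{A}=[a_{ij}]$, $a_{ij}=1$ if follower $i$ receives information from follower $j$, else $0$, and $a_{ii}=0$. The degree matrix is $\mathcal{D}=\mathrm{diag}\{d_{11},\dots,d_{NN}\}$ with $d_{ii}=\sum_{k=1}^N a_{ik}$, and the Laplacian is $\mathcal{L}=\mathcal{D}-\mathcal{A}$. The pinning matrix is $\mathcal{P}=\mathrm{diag}\{p_{11},\dots,p_{NN}\}$ with $p_{ii}=1$ if follower $i$ receives information from the leader, else $0$. A directed acyclic graph is a finite directed graph with no directed cycles. The vectors $\hat p,\hat v,\hat a\in\mathbb{R}^N$ collect the followers' position, velocity and acceleration tracking errors $\hat p_i=p_i-p_0+id_0$, $\hat v_i=v_i-v_0$, $\hat a_i=a_i$ under the controller $u_i=-k_i^T(\sum_j a_{ij}(\hat x_i-\hat x_j)+p_{ii}\hat x_i)$, $\hat x_i=[\hat p_i,\hat v_i,\hat a_i]^T$, for vehicle dynamics $\dot p_i=v_i$, $\dot v_i=a_i$, $\tau_i\dot a_i+a_i=u_i$. *)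

theory Defs
  imports "HOL-Analysis.Analysis"
begin

definition veh_A :: "real \<Rightarrow> real^3^3" where
  "veh_A tau = vector [vector [0, 1, 0], vector [0, 0, 1], vector [0, 0, - 1 / tau]]"

definition veh_B :: "real \<Rightarrow> real^1^3" where
  "veh_B tau = vector [vector [0], vector [0], vector [1 / tau]]"

definition psd :: "real^'m^'m \<Rightarrow> bool" where
  "psd P \<longleftrightarrow> transpose P = P \<and> (\<forall>x. 0 \<le> x \<bullet> (P *v x))"

definition riccati :: "real^3^3 \<Rightarrow> real^3^3 \<Rightarrow> real^1^3 \<Rightarrow> real \<Rightarrow> bool" where
  "riccati P A B eps \<longleftrightarrow>
     P ** A + transpose A ** P - P ** B ** transpose B ** P + eps *\<^sub>R mat 1 = 0"

definition diagm :: "('n::finite \<Rightarrow> real) \<Rightarrow> real^'n^'n" where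
  "diagm d = (\<chi> i j. if i = j then d i else 0)"

definition adjacency :: "real^'n^'n \<Rightarrow> bool" where
  "adjacency Adj \<longleftrightarrow> (\<forall>i j. Adj$i$j = 0 \<or> Adj$i$j = 1) \<and> (\<forall>i. Adj$i$i = 0)"

(* edge relation: (i,j) iff follower i receives information from follower j *)
definition edges :: "real^'n^'n \<Rightarrow> ('n \<times> 'n) set" where
  "edges Adj = {(i, j). Adj$i$j = 1}"

definition is_DAG :: "real^'n^'n \<Rightarrow> bool" where
  "is_DAG Adj \<longleftrightarrow> acyclic (edges Adj)"

definition degm :: "real^'n^'n \<Rightarrow> real^'n^'n" where
  "degm Adj = diagm (\<lambda>i. \<Sum>k\<in>UNIV. Adj$i$k)"

definition laplacian :: "real^'n^'n \<Rightarrow> real^'n^'n" where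
  "laplacian Adj = degm Adj - Adj"

definition pinning :: "real^'n^'n \<Rightarrow> bool" where
  "pinning Pm \<longleftrightarrow> (\<forall>i j. i \<noteq> j \<longrightarrow> Pm$i$j = 0) \<and> (\<forall>i. Pm$i$i = 0 \<or> Pm$i$i = 1)"

definition closed_loop ::
  "real^'n^'n \<Rightarrow> real^'n^'n \<Rightarrow> real^'n^'n \<Rightarrow> real^'n^'n \<Rightarrow> real^'n^'n
   \<Rightarrow> ((real^'n) \<times> (real^'n) \<times> (real^'n)) \<Rightarrow> ((real^'n) \<times> (real^'n) \<times> (real^'n))" where
  "closed_loop Tp Tv Ta Dl G = (\<lambda>(p, v, a).
      (v, a, - ((Tp ** G) *v p) - ((Tv ** G) *v v) - ((Dl + Ta ** G) *v a)))"

definition is_solution :: "('a::real_normed_vector \<Rightarrow> 'a) \<Rightarrow> (real \<Rightarrow> 'a) \<Rightarrow> bool" where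
  "is_solution f x \<longleftrightarrow> (\<forall>t\<ge>0. (x has_vector_derivative f (x t)) (at t within {0..}))"

definition asymptotically_stable :: "('a::real_normed_vector \<Rightarrow> 'a) \<Rightarrow> bool" where
  "asymptotically_stable f \<longleftrightarrow>
     (\<forall>e>0. \<exists>d>0. \<forall>x. is_solution f x \<and> norm (x 0) < d \<longrightarrow> (\<forall>t\<ge>0. norm (x t) < e)) \<and>
     (\<exists>d>0. \<forall>x. is_solution f x \<and> norm (x 0) < d \<longrightarrow> (x \<longlongrightarrow> 0) at_top)"

end

theory Submission
  imports Defs
begin

lemma scal:
  fixes a11 a12 a13 a22 a23 a33 z1 z2 z3 t e A :: real
  assumes t: "t \<noteq> 0"
  assumes H: "z1 * (a11 * z2 + a12 * z3 - a13 * z3 / t) + z2 * (a12 * z2 + a22 * z3 - a23 * z3 / t) +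
     z3 * (a13 * z2 + a23 * z3 - a33 * z3 / t) +
     (z2 * (a11 * z1 + a12 * z2 + a13 * z3) + z3 * (a12 * z1 + a22 * z2 + a23 * z3) -
      z3 * (a13 * z1 + a23 * z2 + a33 * z3) / t) -
     (z1 * (a13 * (a13 * z1 + a23 * z2 + a33 * z3)) / (t * t) +
      z2 * (a23 * (a13 * z1 + a23 * z2 + a33 * z3)) / (t * t) +
      z3 * (a33 * (a13 * z1 + a23 * z2 + a33 * z3)) / (t * t)) +
     e * (z1 * z1 + z2 * z2 + z3 * z3) = 0"
  shows "2 * (z1 * (a11 * z2 + a12 * z3 + a13 * (- z3 / t - A / t)) + z2 * (a12 * z2 + a22 * z3 + a23 * (- z3 / t - A / t))
           + z3 * (a13 * z2 + a23 * z3 + a33 * (- z3 / t - A / t)))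
     = ((a13 * z1 + a23 * z2 + a33 * z3) / t)^2 - e * (z1 * z1 + z2 * z2 + z3 * z3) - 2 * ((a13 * z1 + a23 * z2 + a33 * z3) / t) * A"
proof -
  let ?X = "z1 * (a11 * z2 + a12 * z3 - a13 * z3 / t) + z2 * (a12 * z2 + a22 * z3 - a23 * z3 / t) +
     z3 * (a13 * z2 + a23 * z3 - a33 * z3 / t) +
     (z2 * (a11 * z1 + a12 * z2 + a13 * z3) + z3 * (a12 * z1 + a22 * z2 + a23 * z3) -
      z3 * (a13 * z1 + a23 * z2 + a33 * z3) / t) -
     (z1 * (a13 * (a13 * z1 + a23 * z2 + a33 * z3)) / (t * t) +
      z2 * (a23 * (a13 * z1 + a23 * z2 + a33 * z3)) / (t * t) +
      z3 * (a33 * (a13 * z1 + a23 * z2 + a33 * z3)) / (t * t)) +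
     e * (z1 * z1 + z2 * z2 + z3 * z3)"
  have "2 * (z1 * (a11 * z2 + a12 * z3 + a13 * (- z3 / t - A / t)) + z2 * (a12 * z2 + a22 * z3 + a23 * (- z3 / t - A / t))
           + z3 * (a13 * z2 + a23 * z3 + a33 * (- z3 / t - A / t)))
     - (((a13 * z1 + a23 * z2 + a33 * z3) / t)^2 - e * (z1 * z1 + z2 * z2 + z3 * z3) - 2 * ((a13 * z1 + a23 * z2 + a33 * z3) / t) * A) = ?X"
    using t by (simp add: field_simps power2_eq_square)
  then show ?thesis using H by simp
qed
lemma vA: "veh_A tau *v z = vector [z$2, z$3, - z$3 / tau]"
  unfolding veh_A_def
  by (simp add: vec_eq_iff forall_3 matrix_vector_mult_def sum_3)
lemma vBt: "transpose (veh_B tau) *v x = (vector [x$3 / tau] :: real^1)"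
  unfolding veh_B_def
  by (simp add: vec_eq_iff matrix_vector_mult_def sum_3 transpose_def)
lemma vB: "veh_B tau *v (y::real^1) = vector [0, 0, y$1 / tau]"
  unfolding veh_B_def
  by (simp add: vec_eq_iff forall_3 matrix_vector_mult_def)
lemma inner_transpose: "(z::real^'m::finite) \<bullet> (transpose A *v w) = (A *v z) \<bullet> w"
  by (metis dot_lmul_matrix inner_commute vector_transpose_matrix)
lemma scaled_id_mv: "((e::real) *\<^sub>R mat 1) *v (z::real^'m::finite) = e *\<^sub>R z"
  by (simp add: scaleR_matrix_vector_assoc[symmetric])
lemma ric_quad:
  fixes Q :: "real^3^3" and z :: "real^3"
  assumes ric: "riccati Q (veh_A tau) (veh_B tau) e"
  shows "z \<bullet> (Q *v vector [z$2, z$3, - z$3 / tau]) + vector [z$2, z$3, - z$3 / tau] \<bullet> (Q *v z)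
     - z \<bullet> (Q *v vector [0, 0, (Q *v z)$3 / tau / tau]) + e * (z \<bullet> z) = 0"
proof -
  let ?M = "Q ** veh_A tau + transpose (veh_A tau) ** Q - Q ** veh_B tau ** transpose (veh_B tau) ** Q + e *\<^sub>R mat 1"
  have M0: "?M = 0" using ric unfolding riccati_def by simp
  have "z \<bullet> (?M *v z) = z \<bullet> (Q *v (veh_A tau *v z)) + z \<bullet> (transpose (veh_A tau) *v (Q *v z))
      - z \<bullet> (Q *v (veh_B tau *v (transpose (veh_B tau) *v (Q *v z)))) + e * (z \<bullet> z)"
    by (simp add: matrix_vector_mult_add_rdistrib matrix_vector_mult_diff_rdistrib matrix_vector_mul_assoc[symmetric]
        inner_add_right inner_diff_right scaled_id_mv)
  then have "z \<bullet> (Q *v (veh_A tau *v z)) + z \<bullet> (transpose (veh_A tau) *v (Q *v z))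
      - z \<bullet> (Q *v (veh_B tau *v (transpose (veh_B tau) *v (Q *v z)))) + e * (z \<bullet> z) = 0"
    using M0 by simp
  then show ?thesis by (simp only: vA vB vBt inner_transpose vector_1)
qed
lemma veh_deriv:
  fixes Q :: "real^3^3" and z g :: "real^3"
  assumes tau: "tau > 0" and sym: "transpose Q = Q" and ric: "riccati Q (veh_A tau) (veh_B tau) e"
  defines "q \<equiv> vector [Q$3$1/tau, Q$3$2/tau, Q$3$3/tau] :: real^3"
  shows "2 * (z \<bullet> (Q *v (vector [z$2, z$3, - z$3/tau - al * (q \<bullet> g)/tau]))) = (q \<bullet> z)^2 - e * (z \<bullet> z) - 2*al*(q \<bullet> z)*(q \<bullet> g)"
proof -
  have s: "Q$2$1 = Q$1$2" "Q$3$1 = Q$1$3" "Q$3$2 = Q$2$3"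
    using arg_cong[OF sym, of "\<lambda>M. M$1$2"] arg_cong[OF sym, of "\<lambda>M. M$1$3"] arg_cong[OF sym, of "\<lambda>M. M$2$3"]
    by (simp_all add: transpose_def)
  have H: "z \<bullet> (Q *v vector [z$2, z$3, - z$3 / tau]) + vector [z$2, z$3, - z$3 / tau] \<bullet> (Q *v z)
     - z \<bullet> (Q *v vector [0, 0, (Q *v z)$3 / tau / tau]) + e * (z \<bullet> z) = 0"
    by (rule ric_quad[OF ric])
  have tne: "tau \<noteq> 0" using tau by simp
  note S = scal[OF tne, of "z$1" "Q$1$1" "z$2" "Q$1$2" "z$3" "Q$1$3" "Q$2$2" "Q$2$3" "Q$3$3" e "al * (q \<bullet> g)"]
  have H2: "z$1 * (Q$1$1 * z$2 + Q$1$2 * z$3 - Q$1$3 * z$3 / tau) + z$2 * (Q$1$2 * z$2 + Q$2$2 * z$3 - Q$2$3 * z$3 / tau) +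
     z$3 * (Q$1$3 * z$2 + Q$2$3 * z$3 - Q$3$3 * z$3 / tau) +
     (z$2 * (Q$1$1 * z$1 + Q$1$2 * z$2 + Q$1$3 * z$3) + z$3 * (Q$1$2 * z$1 + Q$2$2 * z$2 + Q$2$3 * z$3) -
      z$3 * (Q$1$3 * z$1 + Q$2$3 * z$2 + Q$3$3 * z$3) / tau) -
     (z$1 * (Q$1$3 * (Q$1$3 * z$1 + Q$2$3 * z$2 + Q$3$3 * z$3)) / (tau * tau) +
      z$2 * (Q$2$3 * (Q$1$3 * z$1 + Q$2$3 * z$2 + Q$3$3 * z$3)) / (tau * tau) +
      z$3 * (Q$3$3 * (Q$1$3 * z$1 + Q$2$3 * z$2 + Q$3$3 * z$3)) / (tau * tau)) +
     e * (z$1 * z$1 + z$2 * z$2 + z$3 * z$3) = 0"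
    using H by (simp add: inner_vec_def matrix_vector_mult_def sum_3 s)
  have L: "z \<bullet> (Q *v (vector [z$2, z$3, - z$3/tau - al * (q \<bullet> g)/tau])) =
     z$1 * (Q$1$1 * z$2 + Q$1$2 * z$3 + Q$1$3 * (- z$3 / tau - al * (q \<bullet> g) / tau)) + z$2 * (Q$1$2 * z$2 + Q$2$2 * z$3 + Q$2$3 * (- z$3 / tau - al * (q \<bullet> g) / tau))
           + z$3 * (Q$1$3 * z$2 + Q$2$3 * z$3 + Q$3$3 * (- z$3 / tau - al * (q \<bullet> g) / tau))"
    by (simp only: inner_vec_def matrix_vector_mult_def sum_3 s vector_3 vec_lambda_beta) (simp add: algebra_simps)
  have qz: "q \<bullet> z = (Q$1$3 * z$1 + Q$2$3 * z$2 + Q$3$3 * z$3) / tau"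
    by (simp add: q_def inner_vec_def sum_3 s add_divide_distrib)
  have zz: "z \<bullet> z = z$1 * z$1 + z$2 * z$2 + z$3 * z$3" by (simp add: inner_vec_def sum_3)
  show ?thesis unfolding L qz zz using S[OF H2] by (simp add: mult.assoc)
qed

lemma quad_bounds:
  fixes Q :: "real^'m::finite^'m"
  assumes pd: "\<forall>z. z \<noteq> 0 \<longrightarrow> z \<bullet> (Q *v z) > 0"
  shows "\<exists>m U. m > 0 \<and> U > 0 \<and> (\<forall>z. m * (z \<bullet> z) \<le> z \<bullet> (Q *v z) \<and> z \<bullet> (Q *v z) \<le> U * (z \<bullet> z))"
proof -
  let ?f = "\<lambda>z::real^'m. z \<bullet> (Q *v z)"
  have cont: "continuous_on (sphere 0 1) ?f"
    by (intro continuous_intros linear_continuous_on) auto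
  have cpt: "compact (sphere (0::real^'m) 1)" by simp
  have ne: "sphere (0::real^'m) 1 \<noteq> {}" by simp
  obtain u0 where u0: "u0 \<in> sphere 0 1" "\<forall>y\<in>sphere 0 1. ?f u0 \<le> ?f y"
    using continuous_attains_inf[OF cpt ne cont] by blast
  obtain u1 where u1: "u1 \<in> sphere 0 1" "\<forall>y\<in>sphere 0 1. ?f y \<le> ?f u1"
    using continuous_attains_sup[OF cpt ne cont] by blast
  have "u0 \<noteq> 0" using u0(1) by auto
  then have m0: "?f u0 > 0" using pd by auto
  have sc: "?f z = (norm z)^2 * ?f (z /\<^sub>R norm z)" if "z \<noteq> 0" for z
    using that by (simp add: matrix_vector_mult_scaleR power2_eq_square field_simps)
  have zz: "z \<bullet> z = (norm z)^2" for z :: "real^'m" by (simp add: power2_norm_eq_inner)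
  show ?thesis
  proof (intro exI conjI allI)
    show "0 < ?f u0" by (rule m0)
    show "0 < max (?f u1) 1" by simp
    fix z :: "real^'m"
    show "?f u0 * (z \<bullet> z) \<le> ?f z"
    proof (cases "z = 0")
      case False
      have "z /\<^sub>R norm z \<in> sphere 0 1" using False by simp
      then have "?f u0 \<le> ?f (z /\<^sub>R norm z)" using u0(2) by blast
      then show ?thesis using sc[OF False] zz[of z]
        by (metis mult.commute mult_right_mono zero_le_power2)
    qed simp
    show "?f z \<le> max (?f u1) 1 * (z \<bullet> z)"
    proof (cases "z = 0")
      case False
      have "z /\<^sub>R norm z \<in> sphere 0 1" using False by simp
      then have "?f (z /\<^sub>R norm z) \<le> max (?f u1) 1" using u1(2) by (meson le_max_iff_disj)
      then show ?thesis using sc[OF False] zz[of z]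
        by (metis mult.commute mult_right_mono zero_le_power2)
    qed simp
  qed
qed

lemma psd_zero:
  fixes Q :: "real^'m::finite^'m"
  assumes "psd Q" "z \<bullet> (Q *v z) = 0"
  shows "Q *v z = 0"
proof -
  have sym: "transpose Q = Q" and nn: "\<And>x. 0 \<le> x \<bullet> (Q *v x)" using assms(1) unfolding psd_def by auto
  have symm: "x \<bullet> (Q *v y) = y \<bullet> (Q *v x)" for x y
    by (metis dot_lmul_matrix inner_commute sym transpose_transpose vector_transpose_matrix)
  let ?y = "Q *v z" let ?a = "?y \<bullet> ?y" let ?c = "?y \<bullet> (Q *v ?y)"
  have key: "0 \<le> - 2 * t * ?a + t^2 * ?c" for t :: real
  proof -
    have "0 \<le> (z - t *\<^sub>R ?y) \<bullet> (Q *v (z - t *\<^sub>R ?y))" by (rule nn)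
    also have "\<dots> = z \<bullet> (Q *v z) - t * (z \<bullet> (Q *v ?y)) - t * (?y \<bullet> (Q *v z)) + t^2 * ?c"
      by (simp add: algebra_simps inner_diff_left inner_diff_right power2_eq_square)
    also have "\<dots> = - 2 * t * ?a + t^2 * ?c" using assms(2) symm[of z ?y] by simp
    finally show ?thesis .
  qed
  have a0: "?a \<ge> 0" by simp
  have c0: "?c \<ge> 0" by (rule nn)
  have "?a \<le> 0"
  proof (rule ccontr)
    assume "\<not> ?a \<le> 0"
    hence ap: "?a > 0" by linarith
    define t where "t = ?a / (?c + 1)"
    have tp: "t > 0" using ap c0 by (simp add: t_def)
    have "0 \<le> - 2 * t * ?a + t^2 * ?c" by (rule key)
    hence "2 * ?a \<le> t * ?c" using tp by (simp add: power2_eq_square algebra_simps)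
    moreover have "t * ?c < ?a" using ap c0 unfolding t_def
      by (simp add: field_simps)
    ultimately show False using ap by simp
  qed
  then show ?thesis using a0 by simp
qed

lemma lyap_decay:
  fixes f :: "'a::real_normed_vector \<Rightarrow> 'a" and V :: "'a \<Rightarrow> real"
  assumes lam: "lam > 0"
    and dV: "\<And>y. (V has_derivative DV y) (at y)"
    and dec: "\<And>y. DV y (f y) \<le> - lam * V y"
    and sol: "is_solution f x" and t: "t \<ge> 0"
  shows "V (x t) \<le> exp (- lam * t) * V (x 0)"
proof -
  define g where "g s = exp (lam * s) * V (x s)" for s
  define D where "D s = exp (lam * s) * lam * V (x s) + exp (lam * s) * DV (x s) (f (x s))" for s
  have der: "(g has_derivative (\<lambda>h. h * D s)) (at s within {0..t})" if "0 \<le> s" "s \<le> t" for s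
  proof -
    have xs: "(x has_derivative (\<lambda>h. h *\<^sub>R f (x s))) (at s within {0..})"
      using sol that unfolding is_solution_def has_vector_derivative_def by auto
    have lin: "linear (DV (x s))" using dV has_derivative_bounded_linear bounded_linear.linear by blast
    have "((\<lambda>s. V (x s)) has_derivative (\<lambda>h. DV (x s) (h *\<^sub>R f (x s)))) (at s within {0..})"
      by (rule has_derivative_compose[OF xs dV])
    moreover have "(\<lambda>h. DV (x s) (h *\<^sub>R f (x s))) = (\<lambda>h. h * DV (x s) (f (x s)))"
      using linear_scale[OF lin] by auto
    ultimately have vd: "((\<lambda>s. V (x s)) has_real_derivative DV (x s) (f (x s))) (at s within {0..})"
      unfolding has_field_derivative_def by (simp add: mult.commute[of _ "DV (x s) (f (x s))"])
    have ed: "((\<lambda>s. exp (lam * s)) has_real_derivative exp (lam * s) * lam) (at s within {0..})"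
      by (auto intro!: derivative_eq_intros)
    have "(g has_real_derivative D s) (at s within {0..})"
      unfolding g_def D_def using DERIV_mult[OF ed vd] by (simp add: algebra_simps)
    then have "(g has_real_derivative D s) (at s within {0..t})"
      by (rule DERIV_subset) auto
    then show ?thesis unfolding has_field_derivative_def by (simp add: mult.commute[of _ "D s"])
  qed
  obtain xi where "xi \<in> {0..t}" "g t - g 0 = (t - 0) * D xi"
    using mvt_very_simple[OF t der] by blast
  moreover have "D xi \<le> 0"
  proof -
    have "D xi = exp (lam * xi) * (lam * V (x xi) + DV (x xi) (f (x xi)))"
      by (simp add: D_def algebra_simps)
    moreover have "lam * V (x xi) + DV (x xi) (f (x xi)) \<le> 0" using dec[of "x xi"] by simp
    ultimately show ?thesis by (simp add: mult_nonneg_nonpos)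
  qed
  ultimately have "g t \<le> g 0" using t mult_nonneg_nonpos[of t "D xi"] by simp
  then have "exp (lam * t) * V (x t) \<le> V (x 0)" by (simp add: g_def)
  then have "exp (- lam * t) * (exp (lam * t) * V (x t)) \<le> exp (- lam * t) * V (x 0)"
    by (simp add: mult_left_mono)
  then show ?thesis by (simp add: exp_minus field_simps)
qed

lemma lyap_stable:
  fixes f :: "'a::real_normed_vector \<Rightarrow> 'a" and V :: "'a \<Rightarrow> real"
  assumes m: "m > 0" and Mx: "Mx > 0" and lam: "lam > 0"
    and lo: "\<And>y. m * (norm y)^2 \<le> V y" and up: "\<And>y. V y \<le> Mx * (norm y)^2"
    and dV: "\<And>y. (V has_derivative DV y) (at y)"
    and dec: "\<And>y. DV y (f y) \<le> - lam * V y"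
  shows "asymptotically_stable f"
proof -
  have bnd: "(norm (x t))^2 \<le> Mx / m * exp (- lam * t) * (norm (x 0))^2"
    if sol: "is_solution f x" and t: "t \<ge> 0" for x t
  proof -
    have "m * (norm (x t))^2 \<le> exp (- lam * t) * V (x 0)"
      using lo[of "x t"] lyap_decay[OF lam dV dec sol t] by linarith
    also have "\<dots> \<le> exp (- lam * t) * (Mx * (norm (x 0))^2)"
      using up[of "x 0"] by (simp add: mult_left_mono)
    finally show ?thesis using m by (simp add: field_simps)
  qed
  show ?thesis unfolding asymptotically_stable_def
  proof (intro conjI allI impI)
    fix e :: real assume e: "e > 0"
    define d where "d = e * sqrt (m / Mx)"
    have d: "d > 0" using e m Mx by (simp add: d_def)
    show "\<exists>d>0. \<forall>x. is_solution f x \<and> norm (x 0) < d \<longrightarrow> (\<forall>t\<ge>0. norm (x t) < e)"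
    proof (intro exI[of _ d] conjI allI impI d)
      fix x and t :: real assume H: "is_solution f x \<and> norm (x 0) < d" and t: "t \<ge> 0"
      have "(norm (x t))^2 \<le> Mx / m * exp (- lam * t) * (norm (x 0))^2" using bnd H t by blast
      also have "\<dots> \<le> Mx / m * (norm (x 0))^2"
        using m Mx lam t by (intro mult_right_mono) (auto simp: field_simps)
      also have "\<dots> < Mx / m * d^2"
        using H m Mx by (intro mult_strict_left_mono power_strict_mono) auto
      also have "\<dots> = e^2" using m Mx e by (simp add: d_def power_mult_distrib)
      finally show "norm (x t) < e" using e by (simp add: power_less_imp_less_base)
    qed
  next
    show "\<exists>d>0. \<forall>x. is_solution f x \<and> norm (x 0) < d \<longrightarrow> (x \<longlongrightarrow> 0) at_top"
    proof (intro exI[of _ 1] conjI allI impI)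
      show "(0::real) < 1" by simp
    next
      fix x assume H: "is_solution f x \<and> norm (x 0) < 1"
      let ?C = "Mx / m * (norm (x 0))^2"
      show "(x \<longlongrightarrow> 0) at_top"
      proof (rule Lim_null_comparison)
        show "\<forall>\<^sub>F t in at_top. norm (x t) \<le> sqrt (?C * exp (- lam * t))"
          using eventually_ge_at_top[of "0::real"]
        proof (rule eventually_mono)
          fix t :: real assume "0 \<le> t"
          then have "(norm (x t))^2 \<le> ?C * exp (- lam * t)" using bnd[of x t] H by (simp add: ac_simps)
          then show "norm (x t) \<le> sqrt (?C * exp (- lam * t))" by (simp add: real_le_rsqrt)
        qed
        have "LIM t at_top. lam * t :> at_top"
          by (rule filterlim_tendsto_pos_mult_at_top[OF tendsto_const lam filterlim_ident])
        then have "LIM t at_top. - lam * t :> at_bot"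
          by (simp add: filterlim_uminus_at_bot)
        then have "((\<lambda>t. exp (- lam * t)) \<longlongrightarrow> 0) at_top"
          by (rule filterlim_compose[OF exp_at_bot])
        then have "((\<lambda>t. ?C * exp (- lam * t)) \<longlongrightarrow> ?C * 0) at_top" by (rule tendsto_mult_left)
        then have "((\<lambda>t. sqrt (?C * exp (- lam * t))) \<longlongrightarrow> sqrt (?C * 0)) at_top" by (rule tendsto_real_sqrt)
        then show "((\<lambda>t. sqrt (?C * exp (- lam * t))) \<longlongrightarrow> 0) at_top" by simp
      qed
    qed
  qed
qed


lemma sym_quad:
  fixes Q :: "real^'m::finite^'m"
  assumes "transpose Q = Q"
  shows "x \<bullet> (Q *v y) = y \<bullet> (Q *v x)"
  by (metis assms dot_lmul_matrix inner_commute vector_transpose_matrix)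

lemma quad_deriv:
  fixes L :: "'a::real_normed_vector \<Rightarrow> real^'m::finite" and Q :: "real^'m^'m"
  assumes L: "bounded_linear L" and sym: "transpose Q = Q"
  shows "((\<lambda>y. L y \<bullet> (Q *v L y)) has_derivative (\<lambda>d. 2 * (L y \<bullet> (Q *v L d)))) (at y)"
proof -
  have dL: "(L has_derivative L) (at y)" using L by (rule bounded_linear.has_derivative[OF _ has_derivative_ident])
  have QL: "bounded_linear (\<lambda>d. Q *v L d)"
    using bounded_linear_compose[OF matrix_vector_mul_bounded_linear[of Q] L] .
  have dQL: "((\<lambda>y. Q *v L y) has_derivative (\<lambda>d. Q *v L d)) (at y)"
    using QL by (rule bounded_linear.has_derivative[OF _ has_derivative_ident])
  have "((\<lambda>y. L y \<bullet> (Q *v L y)) has_derivative (\<lambda>d. L y \<bullet> (Q *v L d) + L d \<bullet> (Q *v L y))) (at y)"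
    by (rule has_derivative_inner[OF dL dQL])
  moreover have "(\<lambda>d. L y \<bullet> (Q *v L d) + L d \<bullet> (Q *v L y)) = (\<lambda>d. 2 * (L y \<bullet> (Q *v L d)))"
    using sym_quad[OF sym] by (auto simp: fun_eq_iff)
  ultimately show ?thesis by simp
qed

definition zz :: "'n::finite \<Rightarrow> (real^'n) \<times> (real^'n) \<times> (real^'n) \<Rightarrow> real^3" where
  "zz i y = vector [fst y $ i, fst (snd y) $ i, snd (snd y) $ i]"

lemma zz_linear: "bounded_linear (zz i)"
proof -
  have "linear (zz i)"
    by (rule linearI) (auto simp: zz_def vec_eq_iff forall_3)
  then show ?thesis by (simp add: linear_conv_bounded_linear)
qed

lemma zz_comp [simp]: "zz i y $ 1 = fst y $ i" "zz i y $ 2 = fst (snd y) $ i" "zz i y $ 3 = snd (snd y) $ i"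
  by (simp_all add: zz_def)

lemma norm_sq_zz: "(norm y)^2 = (\<Sum>j\<in>UNIV. zz j y \<bullet> zz j y)"
proof -
  obtain p v a where y: "y = (p, v, a)" by (cases y) auto
  have "(norm y)^2 = y \<bullet> y" by (simp add: power2_norm_eq_inner)
  also have "\<dots> = (\<Sum>j\<in>UNIV. zz j y \<bullet> zz j y)"
    by (simp add: y inner_vec_def sum_3 sum.distrib)
  finally show ?thesis .
qed

lemma diagm_mv: "(diagm d *v x) $ i = d i * x $ i"
  unfolding diagm_def matrix_vector_mult_def
  by (simp add: if_distrib[of "\<lambda>z. z * _"] sum.delta cong: if_cong)

lemma diagm_mm_mv: "((diagm d ** G) *v x) $ i = d i * (G *v x) $ i"
  unfolding diagm_def matrix_vector_mult_def matrix_matrix_mult_def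
  by (simp add: if_distrib[of "\<lambda>z. z * _"] sum.delta sum_distrib_left mult.assoc cong: if_cong)

lemma recip_min:
  fixes a :: "'n::finite \<Rightarrow> real"
  assumes "\<forall>j. a j > 0"
  shows "1 / (\<Sum>j\<in>UNIV. 1 / a j) \<le> a i" "1 / (\<Sum>j\<in>UNIV. 1 / a j) > 0"
proof -
  have "1 / a i \<le> (\<Sum>j\<in>UNIV. 1 / a j)"
    by (rule member_le_sum) (use assms in \<open>auto intro: less_imp_le\<close>)
  moreover have "1 / a i > 0" using assms by simp
  moreover have "(\<Sum>j\<in>UNIV. 1 / a j) > 0" using assms by (intro sum_pos) auto
  ultimately show "1 / (\<Sum>j\<in>UNIV. 1 / a j) \<le> a i" "1 / (\<Sum>j\<in>UNIV. 1 / a j) > 0"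
    using assms[rule_format, of i] by (auto simp: field_simps)
qed

lemma young_sum:
  fixes a v :: "'n::finite \<Rightarrow> real"
  assumes a: "\<forall>j. 0 \<le> a j \<and> a j \<le> 1" and d: "dl > 0"
  shows "2 * al * u * (\<Sum>j\<in>UNIV. a j * v j) \<le> real CARD('n) * dl * u^2 + (al^2 / dl) * (\<Sum>j\<in>UNIV. a j * (v j)^2)"
proof -
  have t: "2 * al * u * (a j * v j) \<le> dl * u^2 + (al^2 / dl) * (a j * (v j)^2)" for j
  proof -
    have "0 \<le> (dl * u - al * v j)^2" by simp
    then have "2 * al * u * v j \<le> dl * u^2 + (al^2/dl) * (v j)^2"
      using d by (simp add: field_simps power2_eq_square)
    then have "a j * (2 * al * u * v j) \<le> a j * (dl * u^2 + (al^2/dl) * (v j)^2)"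
      using a by (simp add: mult_left_mono)
    moreover have "a j * (dl * u^2) \<le> dl * u^2" using a d by (simp add: mult_left_le_one_le)
    ultimately show ?thesis by (simp add: algebra_simps)
  qed
  have "2 * al * u * (\<Sum>j\<in>UNIV. a j * v j) = (\<Sum>j\<in>UNIV. 2 * al * u * (a j * v j))"
    by (simp add: sum_distrib_left)
  also have "\<dots> \<le> (\<Sum>j\<in>UNIV. dl * u^2 + (al^2 / dl) * (a j * (v j)^2))"
    by (rule sum_mono) (rule t)
  also have "\<dots> = real CARD('n) * dl * u^2 + (al^2 / dl) * (\<Sum>j\<in>UNIV. a j * (v j)^2)"
    by (simp add: sum.distrib sum_distrib_left)
  finally show ?thesis .
qed

lemma dag_rank:
  fixes Adj :: "real^'n::finite^'n"
  assumes "is_DAG Adj" "Adj $ i $ j = 1"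
  shows "card {k. (k, i) \<in> (edges Adj)^+} < card {k. (k, j) \<in> (edges Adj)^+}"
proof (rule psubset_card_mono)
  show "finite {k. (k, j) \<in> (edges Adj)^+}" by simp
  have ij: "(i, j) \<in> edges Adj" using assms(2) by (simp add: edges_def)
  have "{k. (k, i) \<in> (edges Adj)^+} \<subseteq> {k. (k, j) \<in> (edges Adj)^+}"
    using ij by (auto intro: trancl_into_trancl)
  moreover have "i \<in> {k. (k, j) \<in> (edges Adj)^+}" using ij by auto
  moreover have "i \<notin> {k. (k, i) \<in> (edges Adj)^+}" using assms(1) by (simp add: is_DAG_def acyclic_def)
  ultimately show "{k. (k, i) \<in> (edges Adj)^+} \<subset> {k. (k, j) \<in> (edges Adj)^+}" by blast
qed

lemma veh_pd:
  fixes Q :: "real^3^3" and z :: "real^3"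
  assumes tau: "tau > 0" and e: "e > 0" and psd: "psd Q" and ric: "riccati Q (veh_A tau) (veh_B tau) e"
    and z: "z \<noteq> 0"
  shows "z \<bullet> (Q *v z) > 0"
proof -
  have sym: "transpose Q = Q" and nn: "0 \<le> z \<bullet> (Q *v z)" using psd unfolding psd_def by auto
  show ?thesis
  proof (rule ccontr)
    assume "\<not> ?thesis"
    then have z0: "z \<bullet> (Q *v z) = 0" using nn by simp
    then have Qz: "Q *v z = 0" using psd_zero[OF psd] by blast
    let ?w = "vector [z$2, z$3, - z$3/tau - 0 * (vector [Q$3$1/tau, Q$3$2/tau, Q$3$3/tau] \<bullet> (0::real^3))/tau] :: real^3"
    have D: "2 * (z \<bullet> (Q *v ?w)) = (vector [Q$3$1/tau, Q$3$2/tau, Q$3$3/tau] \<bullet> z)^2 - e * (z \<bullet> z) - 2*0*(vector [Q$3$1/tau, Q$3$2/tau, Q$3$3/tau] \<bullet> z)*(vector [Q$3$1/tau, Q$3$2/tau, Q$3$3/tau] \<bullet> (0::real^3))"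
      by (rule veh_deriv[OF tau sym ric])
    have "z \<bullet> (Q *v ?w) = ?w \<bullet> (Q *v z)" by (rule sym_quad[OF sym])
    then have l0: "z \<bullet> (Q *v ?w) = 0" using Qz by simp
    have "(Q *v z) $ 3 = 0" using Qz by simp
    then have "vector [Q$3$1/tau, Q$3$2/tau, Q$3$3/tau] \<bullet> z = 0"
      by (simp add: inner_vec_def matrix_vector_mult_def sum_3 add_divide_distrib[symmetric] mult.commute)
    then have "e * (z \<bullet> z) = 0" using D l0 by simp
    then have "z \<bullet> z = 0" using e by simp
    then show False using z by simp
  qed
qed

lemma aux_dl: "(N::real) > 0 \<Longrightarrow> X > 0 \<Longrightarrow> N * (e / (2 * N * X)) * (Q * Z) = (e / 2) * (Q / X) * Z"
  by (simp add: field_simps)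

theorem theorem3:
  fixes Adj Pm :: "real^'n::finite^'n"
    and tau eps alpha :: "'n \<Rightarrow> real"
    and P :: "'n \<Rightarrow> real^3^3"
    and k :: "'n \<Rightarrow> real^3"
  assumes adj: "adjacency Adj"
    and pin: "pinning Pm"
    and dag: "is_DAG Adj"
    and reach: "\<forall>i. degm Adj $ i $ i + Pm $ i $ i > 0"
    and tau_pos: "\<forall>i. tau i > 0"
    and eps_pos: "\<forall>i. eps i > 0"
    and P_psd: "\<forall>i. psd (P i)"
    and P_ric: "\<forall>i. riccati (P i) (veh_A (tau i)) (veh_B (tau i)) (eps i)"
    and gain: "\<forall>i. (\<chi> r c. k i $ c :: real^3^1) = alpha i *\<^sub>R (transpose (veh_B (tau i)) ** P i)"
    and alpha_ge: "\<forall>i. alpha i \<ge> 1 / (2 * (degm Adj $ i $ i + Pm $ i $ i))"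
  shows "asymptotically_stable
           (closed_loop (diagm (\<lambda>i. k i $ 1 / tau i)) (diagm (\<lambda>i. k i $ 2 / tau i))
              (diagm (\<lambda>i. k i $ 3 / tau i)) (diagm (\<lambda>i. 1 / tau i)) (laplacian Adj + Pm))"
proof -
  define G where "G = laplacian Adj + Pm"
  define f where "f = closed_loop (diagm (\<lambda>i. k i $ 1 / tau i)) (diagm (\<lambda>i. k i $ 2 / tau i))
              (diagm (\<lambda>i. k i $ 3 / tau i)) (diagm (\<lambda>i. 1 / tau i)) G"
  define N where "N = real CARD('n)"
  define c where "c i = degm Adj $ i $ i + Pm $ i $ i" for i
  define q where "q i = (vector [P i$3$1/tau i, P i$3$2/tau i, P i$3$3/tau i] :: real^3)" for i
  have Npos: "N > 0" by (simp add: N_def)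
  have eps_nn: "0 \<le> eps i" for i using eps_pos by (simp add: less_imp_le)
  have sym: "transpose (P i) = P i" for i using P_psd unfolding psd_def by auto
  have A01: "0 \<le> Adj $ i $ j \<and> Adj $ i $ j \<le> 1" for i j
    using adj unfolding adjacency_def by (metis order_refl zero_le_one)
  have kq: "k i $ r = alpha i * q i $ r" for i r
  proof -
    have "(\<chi> r c. k i $ c :: real^3^1) $ 1 $ r = (alpha i *\<^sub>R (transpose (veh_B (tau i)) ** P i)) $ 1 $ r"
      using gain by simp
    then have "k i $ r = alpha i * (P i $ 3 $ r / tau i)"
      by (simp add: matrix_matrix_mult_def transpose_def veh_B_def sum_3)
    then show ?thesis using exhaust_3[of r] by (auto simp: q_def)
  qed
  have Pm_diag: "Pm = diagm (\<lambda>i. Pm $ i $ i)"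
    using pin unfolding pinning_def diagm_def by (auto simp: vec_eq_iff)
  have Gv: "(G *v x) $ i = c i * x $ i - (Adj *v x) $ i" for x i
  proof -
    have "(G *v x) $ i = (degm Adj *v x) $ i - (Adj *v x) $ i + (Pm *v x) $ i"
      by (simp add: G_def laplacian_def algebra_simps)
    also have "\<dots> = c i * x $ i - (Adj *v x) $ i"
    proof -
      have "(Pm *v x) $ i = Pm $ i $ i * x $ i" using diagm_mv[of "\<lambda>i. Pm $ i $ i" x i] Pm_diag by metis
      moreover have "(degm Adj *v x) $ i = degm Adj $ i $ i * x $ i"
        unfolding degm_def by (simp only: diagm_mv) (simp add: diagm_def)
      ultimately show ?thesis by (simp add: c_def algebra_simps)
    qed
    finally show ?thesis .
  qed
  define S where "S i y = (\<Sum>j\<in>UNIV. Adj $ i $ j * (q i \<bullet> zz j y))" for i y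
  have flow: "zz i (f y) = vector [zz i y $ 2, zz i y $ 3,
       - zz i y $ 3 / tau i - alpha i * (q i \<bullet> vector [(G *v fst y) $ i, (G *v fst (snd y)) $ i, (G *v snd (snd y)) $ i]) / tau i]"
    for i y
  proof -
    obtain p v a where y: "y = (p, v, a)" by (cases y) auto
    have t: "tau i > 0" using tau_pos by auto
    show ?thesis
      using t
      apply (simp add: y f_def closed_loop_def zz_def diagm_mm_mv diagm_mv matrix_vector_mult_add_rdistrib
          kq inner_vec_def sum_3 field_simps)
      apply (rule arg_cong[where f=vector])
      apply simp
      done
  qed
  have qg: "q i \<bullet> vector [(G *v fst y) $ i, (G *v fst (snd y)) $ i, (G *v snd (snd y)) $ i]
      = c i * (q i \<bullet> zz i y) - S i y" for i y
  proof -
    have "q i \<bullet> vector [(G *v fst y) $ i, (G *v fst (snd y)) $ i, (G *v snd (snd y)) $ i]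
      = q i $ 1 * (c i * fst y $ i - (Adj *v fst y) $ i) + q i $ 2 * (c i * fst (snd y) $ i - (Adj *v fst (snd y)) $ i)
        + q i $ 3 * (c i * snd (snd y) $ i - (Adj *v snd (snd y)) $ i)"
      by (simp only: Gv) (simp add: inner_vec_def sum_3)
    also have "\<dots> = c i * (q i \<bullet> zz i y) - S i y"
      by (simp add: S_def inner_vec_def sum_3 matrix_vector_mult_def zz_def algebra_simps
        sum_distrib_left sum.distrib)
    finally show ?thesis .
  qed
  have qbnd: "\<exists>m U. m > 0 \<and> U > 0 \<and> (\<forall>z. m * (z \<bullet> z) \<le> z \<bullet> (P i *v z) \<and> z \<bullet> (P i *v z) \<le> U * (z \<bullet> z))" for i
  proof -
    have "\<forall>z. z \<noteq> 0 \<longrightarrow> z \<bullet> (P i *v z) > 0"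
      using veh_pd tau_pos eps_pos P_psd P_ric by blast
    then show ?thesis by (rule quad_bounds)
  qed
  then obtain mq Uq where mqU: "\<And>i. mq i > 0 \<and> Uq i > 0 \<and> (\<forall>z. mq i * (z \<bullet> z) \<le> z \<bullet> (P i *v z) \<and> z \<bullet> (P i *v z) \<le> Uq i * (z \<bullet> z))"
    by metis
  define dl where "dl i = eps i / (2 * N * (q i \<bullet> q i + 1))" for i
  define K where "K = (\<Sum>i\<in>UNIV. (alpha i)^2 * (q i \<bullet> q i) / dl i)"
  define M where "M = 1 + 4 * K * N * (\<Sum>j\<in>UNIV. 1 / eps j)"
  define h where "h j = card {i. (i, j) \<in> (edges Adj)^+}" for j
  define w where "w j = M ^ h j" for j
  define nz where "nz (y::(real^'n) \<times> (real^'n) \<times> (real^'n)) (j::'n) = zz j y \<bullet> zz j y" for y j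
  define V where "V y = (\<Sum>i\<in>UNIV. w i * (zz i y \<bullet> (P i *v zz i y)))" for y
  define DV where "DV y d = (\<Sum>i\<in>UNIV. w i * (2 * (zz i y \<bullet> (P i *v zz i d))))" for y d
  have dlpos: "dl i > 0" for i
  proof -
    have "q i \<bullet> q i + 1 > 0" by (simp add: add_nonneg_pos)
    then show ?thesis unfolding dl_def using eps_pos Npos by (intro divide_pos_pos mult_pos_pos) auto
  qed
  have Ki: "(alpha i)^2 * (q i \<bullet> q i) / dl i \<le> K" for i
    unfolding K_def by (rule member_le_sum) (use dlpos in \<open>auto intro!: divide_nonneg_pos mult_nonneg_nonneg\<close>)
  have K0: "K \<ge> 0" unfolding K_def by (rule sum_nonneg) (use dlpos in \<open>auto intro!: divide_nonneg_pos mult_nonneg_nonneg\<close>)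
  have nz0: "nz y j \<ge> 0" for y j by (simp add: nz_def)
  have node: "2 * (zz i y \<bullet> (P i *v zz i (f y))) \<le> - (eps i / 2) * nz y i + K * (\<Sum>j\<in>UNIV. Adj $ i $ j * nz y j)" for i y
  proof -
    define z where "z = zz i y"
    define u where "u = q i \<bullet> z"
    have t: "tau i > 0" using tau_pos by auto
    have ric: "riccati (P i) (veh_A (tau i)) (veh_B (tau i)) (eps i)" using P_ric by auto
    have "2 * (z \<bullet> (P i *v zz i (f y))) = u^2 - eps i * (z \<bullet> z) - 2 * alpha i * u *
        (q i \<bullet> vector [(G *v fst y) $ i, (G *v fst (snd y)) $ i, (G *v snd (snd y)) $ i])"
      unfolding flow u_def z_def q_def by (rule veh_deriv[OF t sym ric])
    also have "\<dots> = u^2 - eps i * (z \<bullet> z) - 2 * alpha i * c i * u^2 + 2 * alpha i * u * S i y"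
      by (simp add: qg u_def z_def power2_eq_square algebra_simps)
    also have "\<dots> \<le> - eps i * (z \<bullet> z) + 2 * alpha i * u * S i y"
    proof -
      have cp: "c i > 0" using reach by (simp add: c_def)
      have "alpha i \<ge> 1 / (2 * c i)" using alpha_ge by (simp add: c_def)
      then have "2 * alpha i * c i \<ge> 1" using cp by (simp add: field_simps)
      then have "u^2 \<le> 2 * alpha i * c i * u^2" using mult_right_mono[of 1 "2 * alpha i * c i" "u^2"] by simp
      then show ?thesis by simp
    qed
    also have "2 * alpha i * u * S i y \<le> N * dl i * u^2 + ((alpha i)^2 / dl i) * (\<Sum>j\<in>UNIV. Adj $ i $ j * (q i \<bullet> zz j y)^2)"
      unfolding S_def N_def by (rule young_sum) (use A01 dlpos in auto)
    also have "N * dl i * u^2 \<le> (eps i / 2) * (z \<bullet> z)"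
    proof -
      have "u^2 \<le> (q i \<bullet> q i) * (z \<bullet> z)" unfolding u_def by (rule Cauchy_Schwarz_ineq)
      then have "N * dl i * u^2 \<le> N * dl i * ((q i \<bullet> q i) * (z \<bullet> z))"
        using Npos dlpos[of i] by (intro mult_left_mono) auto
      also have "\<dots> = (eps i / 2) * ((q i \<bullet> q i) / (q i \<bullet> q i + 1)) * (z \<bullet> z)"
        unfolding dl_def by (rule aux_dl[OF Npos]) (simp add: add_nonneg_pos)
      also have "\<dots> \<le> (eps i / 2) * 1 * (z \<bullet> z)"
        using eps_pos[rule_format, of i] by (intro mult_right_mono mult_left_mono) (auto simp: field_simps add_pos_nonneg)
      finally show ?thesis by simp
    qed
    also have "((alpha i)^2 / dl i) * (\<Sum>j\<in>UNIV. Adj $ i $ j * (q i \<bullet> zz j y)^2) \<le> K * (\<Sum>j\<in>UNIV. Adj $ i $ j * nz y j)"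
    proof -
      have "(\<Sum>j\<in>UNIV. Adj $ i $ j * (q i \<bullet> zz j y)^2) \<le> (\<Sum>j\<in>UNIV. Adj $ i $ j * ((q i \<bullet> q i) * nz y j))"
        unfolding nz_def by (intro sum_mono mult_left_mono Cauchy_Schwarz_ineq) (use A01 in auto)
      also have "\<dots> = (q i \<bullet> q i) * (\<Sum>j\<in>UNIV. Adj $ i $ j * nz y j)"
        by (simp add: sum_distrib_left algebra_simps)
      finally have "((alpha i)^2 / dl i) * (\<Sum>j\<in>UNIV. Adj $ i $ j * (q i \<bullet> zz j y)^2)
          \<le> ((alpha i)^2 / dl i) * ((q i \<bullet> q i) * (\<Sum>j\<in>UNIV. Adj $ i $ j * nz y j))"
        using dlpos[of i] by (intro mult_left_mono) auto
      also have "\<dots> = ((alpha i)^2 * (q i \<bullet> q i) / dl i) * (\<Sum>j\<in>UNIV. Adj $ i $ j * nz y j)" by simp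
      also have "\<dots> \<le> K * (\<Sum>j\<in>UNIV. Adj $ i $ j * nz y j)"
        using Ki[of i] by (intro mult_right_mono sum_nonneg) (use A01 nz0 in auto)
      finally show ?thesis .
    qed
    finally show ?thesis by (simp add: nz_def z_def)
  qed
  have sum_inv_nn: "(\<Sum>j\<in>UNIV. 1 / eps j) \<ge> 0" by (rule sum_nonneg) (use eps_nn in auto)
  have Mge: "M \<ge> 1" unfolding M_def using K0 Npos sum_inv_nn by simp
  have Mpos: "M > 0" using Mge by simp
  have w1: "w j \<ge> 1" for j unfolding w_def using Mge by simp
  have w0: "0 \<le> w j" for j using w1[of j] by simp
  have wnz: "0 \<le> w j * nz y j" for j y using w0[of j] nz0[of y j] by simp
  have wA: "w i * Adj $ i $ j \<le> w j / M" for i j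
  proof (cases "Adj $ i $ j = 0")
    case True then show ?thesis using w1[of j] Mpos by simp
  next
    case False
    then have a1: "Adj $ i $ j = 1" using adj unfolding adjacency_def by metis
    have "h i < h j" unfolding h_def by (rule dag_rank[OF dag a1])
    then have "M ^ Suc (h i) \<le> M ^ h j" using Mge by (intro power_increasing) auto
    then have "w i * M \<le> w j" by (simp add: w_def mult.commute)
    then show ?thesis using a1 Mpos by (simp add: field_simps)
  qed
  have colsum: "(\<Sum>i\<in>UNIV. w i * Adj $ i $ j) \<le> N * (w j / M)" for j
  proof -
    have "(\<Sum>i\<in>UNIV. w i * Adj $ i $ j) \<le> (\<Sum>i\<in>(UNIV::'n set). w j / M)" by (rule sum_mono) (rule wA)
    also have "\<dots> = N * (w j / M)" by (simp add: N_def)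
    finally show ?thesis .
  qed
  have KNM: "K * N / M \<le> eps j / 4" for j
  proof -
    have ej: "eps j > 0" using eps_pos by auto
    have "1 / eps j \<le> (\<Sum>j\<in>UNIV. 1 / eps j)" by (rule member_le_sum) (use eps_nn in auto)
    then have "4 * K * N * (1 / eps j) \<le> 4 * K * N * (\<Sum>j\<in>UNIV. 1 / eps j)"
      using K0 Npos by (intro mult_left_mono) auto
    then have "4 * K * N / eps j \<le> M - 1" by (simp add: M_def)
    then have "4 * K * N \<le> (M - 1) * eps j" using ej by (simp add: field_simps)
    then have "K * N \<le> (eps j / 4) * M" using ej by (simp add: algebra_simps)
    then show ?thesis using Mpos by (simp add: field_simps)
  qed
  have DVf: "DV y (f y) \<le> - (\<Sum>j\<in>UNIV. w j * (eps j / 4) * nz y j)" for y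
  proof -
    have "DV y (f y) \<le> (\<Sum>i\<in>UNIV. w i * (- (eps i / 2) * nz y i + K * (\<Sum>j\<in>UNIV. Adj $ i $ j * nz y j)))"
      unfolding DV_def using w1 by (intro sum_mono mult_left_mono node) (auto intro: order_trans[OF zero_le_one])
    also have "\<dots> = - (\<Sum>i\<in>UNIV. w i * (eps i / 2) * nz y i) + K * (\<Sum>j\<in>UNIV. (\<Sum>i\<in>UNIV. w i * Adj $ i $ j) * nz y j)"
    proof -
      have "(\<Sum>i\<in>UNIV. w i * (K * (\<Sum>j\<in>UNIV. Adj $ i $ j * nz y j)))
          = K * (\<Sum>i\<in>UNIV. \<Sum>j\<in>UNIV. w i * Adj $ i $ j * nz y j)"
        by (simp add: sum_distrib_left algebra_simps)
      also have "\<dots> = K * (\<Sum>j\<in>UNIV. \<Sum>i\<in>UNIV. w i * Adj $ i $ j * nz y j)"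
        by (subst sum.swap) simp
      also have "\<dots> = K * (\<Sum>j\<in>UNIV. (\<Sum>i\<in>UNIV. w i * Adj $ i $ j) * nz y j)"
        by (simp add: sum_distrib_right)
      finally have sw: "(\<Sum>i\<in>UNIV. w i * (K * (\<Sum>j\<in>UNIV. Adj $ i $ j * nz y j)))
          = K * (\<Sum>j\<in>UNIV. (\<Sum>i\<in>UNIV. w i * Adj $ i $ j) * nz y j)" .
      have "(\<Sum>i\<in>UNIV. w i * (- (eps i / 2) * nz y i + K * (\<Sum>j\<in>UNIV. Adj $ i $ j * nz y j)))
          = (\<Sum>i\<in>UNIV. w i * (K * (\<Sum>j\<in>UNIV. Adj $ i $ j * nz y j)) - w i * (eps i / 2) * nz y i)"
        by (rule sum.cong) (simp_all add: algebra_simps)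
      also have "\<dots> = (\<Sum>i\<in>UNIV. w i * (K * (\<Sum>j\<in>UNIV. Adj $ i $ j * nz y j))) - (\<Sum>i\<in>UNIV. w i * (eps i / 2) * nz y i)"
        by (rule sum_subtractf)
      finally show ?thesis using sw by simp
    qed
    also have "\<dots> \<le> - (\<Sum>i\<in>UNIV. w i * (eps i / 2) * nz y i) + K * (\<Sum>j\<in>UNIV. (N * (w j / M)) * nz y j)"
    proof -
      have "(\<Sum>j\<in>UNIV. (\<Sum>i\<in>UNIV. w i * Adj $ i $ j) * nz y j) \<le> (\<Sum>j\<in>UNIV. (N * (w j / M)) * nz y j)"
        by (intro sum_mono mult_right_mono colsum nz0)
      from mult_left_mono[OF this K0] show ?thesis by linarith
    qed
    finally have F0: "DV y (f y) \<le> - (\<Sum>i\<in>UNIV. w i * (eps i / 2) * nz y i) + K * (\<Sum>j\<in>UNIV. (N * (w j / M)) * nz y j)" .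
    have "K * (\<Sum>j\<in>UNIV. (N * (w j / M)) * nz y j) = (\<Sum>j\<in>UNIV. (K * N / M) * (w j * nz y j))"
      by (simp add: sum_distrib_left algebra_simps)
    also have "\<dots> \<le> (\<Sum>j\<in>UNIV. (eps j / 4) * (w j * nz y j))"
      by (intro sum_mono mult_right_mono KNM wnz)
    finally have F1: "K * (\<Sum>j\<in>UNIV. (N * (w j / M)) * nz y j) \<le> (\<Sum>j\<in>UNIV. (eps j / 4) * (w j * nz y j))" .
    have F: "DV y (f y) \<le> - (\<Sum>i\<in>UNIV. w i * (eps i / 2) * nz y i) + (\<Sum>j\<in>UNIV. (eps j / 4) * (w j * nz y j))"
      using F0 F1 by linarith
    have e1: "(\<Sum>i\<in>UNIV. w i * (eps i / 2) * nz y i) = 2 * (\<Sum>j\<in>UNIV. w j * (eps j / 4) * nz y j)"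
      unfolding sum_distrib_left by (rule sum.cong) (simp_all add: algebra_simps)
    have e2: "(\<Sum>j\<in>UNIV. (eps j / 4) * (w j * nz y j)) = (\<Sum>j\<in>UNIV. w j * (eps j / 4) * nz y j)"
      by (rule sum.cong) (simp_all add: algebra_simps)
    show ?thesis using F e1 e2 by linarith
  qed
  have quadb: "mq j * nz y j \<le> zz j y \<bullet> (P j *v zz j y) \<and> zz j y \<bullet> (P j *v zz j y) \<le> Uq j * nz y j" for j y
    using mqU[of j] unfolding nz_def by blast
  have nzle: "nz y j \<le> (norm y)^2" for y j
    unfolding norm_sq_zz nz_def[symmetric] by (rule member_le_sum) (simp_all add: nz0)
  have Vle: "V y \<le> (\<Sum>j\<in>UNIV. w j * (Uq j * nz y j))" for y
    unfolding V_def by (intro sum_mono mult_left_mono w0) (use quadb in blast)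
  have Vup: "V y \<le> (\<Sum>j\<in>UNIV. w j * Uq j) * (norm y)^2" for y
  proof -
    have "(\<Sum>j\<in>UNIV. w j * (Uq j * nz y j)) \<le> (\<Sum>j\<in>UNIV. w j * (Uq j * (norm y)^2))"
      using mqU by (intro sum_mono mult_left_mono w0 nzle) (auto simp: less_imp_le)
    also have "\<dots> = (\<Sum>j\<in>UNIV. w j * Uq j) * (norm y)^2" by (simp add: sum_distrib_right mult.assoc)
    finally show ?thesis using Vle[of y] by linarith
  qed
  define mm where "mm = 1 / (\<Sum>j\<in>UNIV. 1 / mq j)"
  have mq0: "\<forall>j. mq j > 0" using mqU by blast
  have mm: "mm > 0" "\<And>j. mm \<le> mq j" using recip_min[OF mq0] unfolding mm_def by auto
  have Vlo: "mm * (norm y)^2 \<le> V y" for y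
  proof -
    have "mm * (norm y)^2 = (\<Sum>j\<in>UNIV. mm * nz y j)" by (simp add: norm_sq_zz nz_def sum_distrib_left)
    also have "\<dots> \<le> (\<Sum>j\<in>UNIV. w j * (zz j y \<bullet> (P j *v zz j y)))"
    proof (rule sum_mono)
      fix j
      have "mm * nz y j \<le> mq j * nz y j" using mm(2)[of j] nz0[of y j] by (simp add: mult_right_mono)
      also have "\<dots> \<le> zz j y \<bullet> (P j *v zz j y)" using quadb by blast
      also have "\<dots> \<le> w j * (zz j y \<bullet> (P j *v zz j y))"
      proof -
        have "0 \<le> zz j y \<bullet> (P j *v zz j y)"
          using quadb[of j y] mq0 nz0[of y j] by (meson mult_nonneg_nonneg less_imp_le order_trans)
        then show ?thesis using w1[of j] mult_right_mono[of 1 "w j"] by fastforce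
      qed
      finally show "mm * nz y j \<le> w j * (zz j y \<bullet> (P j *v zz j y))" .
    qed
    finally show ?thesis by (simp add: V_def)
  qed
  define lam where "lam = 1 / (\<Sum>j\<in>UNIV. 1 / (eps j / (4 * Uq j)))"
  have lpos0: "\<forall>j. eps j / (4 * Uq j) > 0" using eps_pos mqU by auto
  have lam: "lam > 0" "\<And>j. lam \<le> eps j / (4 * Uq j)" using recip_min[OF lpos0] unfolding lam_def by auto
  have dec: "DV y (f y) \<le> - lam * V y" for y
  proof -
    have "lam * V y \<le> lam * (\<Sum>j\<in>UNIV. w j * (Uq j * nz y j))"
      using Vle[of y] lam(1) by (simp add: mult_left_mono)
    also have "\<dots> = (\<Sum>j\<in>UNIV. (lam * Uq j) * (w j * nz y j))" by (simp add: sum_distrib_left algebra_simps)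
    also have "\<dots> \<le> (\<Sum>j\<in>UNIV. (eps j / 4) * (w j * nz y j))"
    proof (intro sum_mono mult_right_mono wnz)
      fix j
      have "Uq j > 0" using mqU by blast
      then show "lam * Uq j \<le> eps j / 4" using lam(2)[of j] by (simp add: field_simps)
    qed
    also have "\<dots> = (\<Sum>j\<in>UNIV. w j * (eps j / 4) * nz y j)" by (rule sum.cong) (simp_all add: algebra_simps)
    finally show ?thesis using DVf[of y] by linarith
  qed
  have dV: "(V has_derivative DV y) (at y)" for y
    unfolding V_def[abs_def] DV_def
    by (intro has_derivative_sum has_derivative_mult_right quad_deriv zz_linear sym)
  have Mx: "(\<Sum>j\<in>UNIV. w j * Uq j) > 0"
    using w1 mqU by (intro sum_pos) (auto intro: mult_pos_pos less_le_trans[OF zero_less_one])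
  have "asymptotically_stable f"
    by (rule lyap_stable[OF mm(1) Mx lam(1) Vlo Vup dV dec])
  then show ?thesis by (simp add: f_def G_def)
qed

end
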